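(* Let $r$ be a positive integer and let $W_r$ be the $r$-grid. Let $\mathcal{T}$ be the natural tangle of $W_r$, i.e.\ the set of all separations $(A,B)$ of $W_r$ of order less than $r$ such that $B$ contains (the vertex set of) a cross of $W_r$. Then every separation $(A,B)\in\mathcal{T}$ satisfies $|A|\leq s^2$, where $s:=|A\cap B|$ is the order of $(A,B)$.
   Context: For a positive integer $r$, the $r$-grid $W_r$ is the graph with vertex set $\{(i,j):1\le i,j\le r\}$ in which $(i,j)$ and $(i',j')$ are adjacent if and only if $|i-i'|+|j-j'|=1$. For $1\le j\le r$ the set $\{1,\dots,r\}\times\{j\}$ is the $j$th column, and for $1\le i\le r$ the set $\{i\}\times\{1,\dots,r\}$ is the $i$th row; the union of any row with any column is a cross. A separation of a graph $G$ is a pair $(A,B)$ of vertex sets with $A\cup B=V(G)$ such that no edge of $G$ joins $A\setminus B$ to $B\setminus A$; its order is $|A\cap B|$. *)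

theory Defs
  imports Main
begin

definition grid_vertices :: "nat \<Rightarrow> (nat \<times> nat) set" where
  "grid_vertices r = {1..r} \<times> {1..r}"

definition grid_adj :: "nat \<Rightarrow> nat \<times> nat \<Rightarrow> nat \<times> nat \<Rightarrow> bool" where
  "grid_adj r v w \<longleftrightarrow> v \<in> grid_vertices r \<and> w \<in> grid_vertices r \<and>
     (let (i, j) = v; (i', j') = w in
       abs (int i - int i') + abs (int j - int j') = 1)"

definition grid_column :: "nat \<Rightarrow> nat \<Rightarrow> (nat \<times> nat) set" where
  "grid_column r j = {1..r} \<times> {j}"

definition grid_row :: "nat \<Rightarrow> nat \<Rightarrow> (nat \<times> nat) set" where
  "grid_row r i = {i} \<times> {1..r}"

definition grid_cross :: "nat \<Rightarrow> (nat \<times> nat) set \<Rightarrow> bool" where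
  "grid_cross r X \<longleftrightarrow> (\<exists>i\<in>{1..r}. \<exists>j\<in>{1..r}. X = grid_row r i \<union> grid_column r j)"

definition grid_separation :: "nat \<Rightarrow> (nat \<times> nat) set \<Rightarrow> (nat \<times> nat) set \<Rightarrow> bool" where
  "grid_separation r A B \<longleftrightarrow> A \<union> B = grid_vertices r \<and>
     (\<forall>v w. grid_adj r v w \<longrightarrow> \<not> (v \<in> A - B \<and> w \<in> B - A))"

definition sep_order :: "'a set \<Rightarrow> 'a set \<Rightarrow> nat" where
  "sep_order A B = card (A \<inter> B)"

definition natural_tangle :: "nat \<Rightarrow> ((nat \<times> nat) set \<times> (nat \<times> nat) set) set" where
  "natural_tangle r = {(A, B). grid_separation r A B \<and> sep_order A B < r \<and>
      (\<exists>X. grid_cross r X \<and> X \<subseteq> B)}"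

end

theory Submission
  imports Defs
begin

lemma path_lemma:
  assumes sep: "grid_separation r A B"
    and f0: "f 0 \<in> A - B"
    and adj: "\<forall>k<n. grid_adj r (f k) (f (Suc k))"
    and nsep: "\<forall>k\<le>n. f k \<in> (A \<union> B) - (A \<inter> B)"
  shows "f n \<in> A - B"
  using adj nsep
proof (induction n)
  case 0
  then show ?case using f0 by simp
next
  case (Suc n)
  have IH: "f n \<in> A - B" using Suc by auto
  have "grid_adj r (f n) (f (Suc n))" using Suc.prems by auto
  hence "f (Suc n) \<notin> B - A" using sep IH unfolding grid_separation_def by blast
  moreover have "f (Suc n) \<in> (A \<union> B) - (A \<inter> B)" using Suc.prems by auto
  ultimately show ?case by blast
qed

lemma row_conn:
  assumes sep: "grid_separation r A B"
    and v: "(i, j) \<in> A - B"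
    and i: "i \<in> {1..r}" and j: "j \<in> {1..r}" and j': "j' \<in> {1..r}"
    and nos: "\<forall>y\<in>{1..r}. (i, y) \<notin> A \<inter> B"
  shows "(i, j') \<in> A - B"
proof -
  have V: "A \<union> B = grid_vertices r" using sep unfolding grid_separation_def by blast
  show ?thesis
  proof (cases "j \<le> j'")
    case True
    define f where "f = (\<lambda>k. (i, j + k))"
    have "f (j' - j) \<in> A - B"
    proof (rule path_lemma[OF sep])
      show "f 0 \<in> A - B" using v by (simp add: f_def)
      show "\<forall>k<j' - j. grid_adj r (f k) (f (Suc k))"
        using i j j' True by (auto simp: f_def grid_adj_def grid_vertices_def)
      show "\<forall>k\<le>j' - j. f k \<in> A \<union> B - A \<inter> B"
        using i j j' True nos V by (auto simp: f_def grid_vertices_def)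
    qed
    thus ?thesis using True by (simp add: f_def)
  next
    case False
    define f where "f = (\<lambda>k. (i, j - k))"
    have "f (j - j') \<in> A - B"
    proof (rule path_lemma[OF sep])
      show "f 0 \<in> A - B" using v by (simp add: f_def)
      show "\<forall>k<j - j'. grid_adj r (f k) (f (Suc k))"
        using i j j' False by (auto simp: f_def grid_adj_def grid_vertices_def)
      show "\<forall>k\<le>j - j'. f k \<in> A \<union> B - A \<inter> B"
        using i j j' False nos V by (auto simp: f_def grid_vertices_def)
    qed
    thus ?thesis using False by (simp add: f_def)
  qed
qed

lemma col_conn:
  assumes sep: "grid_separation r A B"
    and v: "(i, j) \<in> A - B"
    and i: "i \<in> {1..r}" and j: "j \<in> {1..r}" and i': "i' \<in> {1..r}"
    and nos: "\<forall>y\<in>{1..r}. (y, j) \<notin> A \<inter> B"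
  shows "(i', j) \<in> A - B"
proof -
  have V: "A \<union> B = grid_vertices r" using sep unfolding grid_separation_def by blast
  show ?thesis
  proof (cases "i \<le> i'")
    case True
    define f where "f = (\<lambda>k. (i + k, j))"
    have "f (i' - i) \<in> A - B"
    proof (rule path_lemma[OF sep])
      show "f 0 \<in> A - B" using v by (simp add: f_def)
      show "\<forall>k<i' - i. grid_adj r (f k) (f (Suc k))"
        using i j i' True by (auto simp: f_def grid_adj_def grid_vertices_def)
      show "\<forall>k\<le>i' - i. f k \<in> A \<union> B - A \<inter> B"
        using i j i' True nos V by (auto simp: f_def grid_vertices_def)
    qed
    thus ?thesis using True by (simp add: f_def)
  next
    case False
    define f where "f = (\<lambda>k. (i - k, j))"
    have "f (i - i') \<in> A - B"
    proof (rule path_lemma[OF sep])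
      show "f 0 \<in> A - B" using v by (simp add: f_def)
      show "\<forall>k<i - i'. grid_adj r (f k) (f (Suc k))"
        using i j i' False by (auto simp: f_def grid_adj_def grid_vertices_def)
      show "\<forall>k\<le>i - i'. f k \<in> A \<union> B - A \<inter> B"
        using i j i' False nos V by (auto simp: f_def grid_vertices_def)
    qed
    thus ?thesis using False by (simp add: f_def)
  qed
qed

theorem lemma2:
  fixes r :: nat and A B :: "(nat \<times> nat) set"
  assumes "r > 0"
    and "(A, B) \<in> natural_tangle r"
  shows "card A \<le> (sep_order A B)^2"
proof -
  have sep: "grid_separation r A B" using assms(2) by (simp add: natural_tangle_def)
  obtain X where X: "grid_cross r X" "X \<subseteq> B" using assms(2) by (auto simp: natural_tangle_def)
  then obtain i0 j0 where ij0: "i0 \<in> {1..r}" "j0 \<in> {1..r}"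
    and Xeq: "X = grid_row r i0 \<union> grid_column r j0" unfolding grid_cross_def by blast
  have V: "A \<union> B = grid_vertices r" using sep unfolding grid_separation_def by blast
  define S where "S = A \<inter> B"
  have finV: "finite (grid_vertices r)" by (simp add: grid_vertices_def)
  have finS: "finite S" using V finV unfolding S_def
    by (metis Int_lower2 finite_subset sup_ge2)
  have sub: "A \<subseteq> fst ` S \<times> snd ` S"
  proof
    fix v assume vA: "v \<in> A"
    obtain i j where v: "v = (i, j)" by fastforce
    have "(i, j) \<in> grid_vertices r" using vA V v by blast
    hence ij: "i \<in> {1..r}" "j \<in> {1..r}" by (auto simp: grid_vertices_def)
    show "v \<in> fst ` S \<times> snd ` S"
    proof (cases "v \<in> B")
      case True
      hence "v \<in> S" using vA by (simp add: S_def)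
      thus ?thesis using v by force
    next
      case False
      hence vAB: "(i, j) \<in> A - B" using vA v by simp
      have "\<exists>y\<in>{1..r}. (i, y) \<in> S"
      proof (rule ccontr)
        assume "\<not> ?thesis"
        hence "\<forall>y\<in>{1..r}. (i, y) \<notin> A \<inter> B" by (simp add: S_def)
        from row_conn[OF sep vAB ij ij0(2) this] have "(i, j0) \<in> A - B" .
        moreover have "(i, j0) \<in> B" using X(2) Xeq ij by (auto simp: grid_column_def)
        ultimately show False by simp
      qed
      then obtain y where y: "(i, y) \<in> S" by blast
      have "\<exists>x\<in>{1..r}. (x, j) \<in> S"
      proof (rule ccontr)
        assume "\<not> ?thesis"
        hence "\<forall>x\<in>{1..r}. (x, j) \<notin> A \<inter> B" by (simp add: S_def)
        from col_conn[OF sep vAB ij ij0(1) this] have "(i0, j) \<in> A - B" .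
        moreover have "(i0, j) \<in> B" using X(2) Xeq ij by (auto simp: grid_row_def)
        ultimately show False by simp
      qed
      then obtain x where x: "(x, j) \<in> S" by blast
      have "i \<in> fst ` S" using y by force
      moreover have "j \<in> snd ` S" using x by force
      ultimately show ?thesis using v by simp
    qed
  qed
  have "card A \<le> card (fst ` S \<times> snd ` S)"
    using sub finS by (intro card_mono) auto
  also have "\<dots> = card (fst ` S) * card (snd ` S)" by (simp add: card_cartesian_product)
  also have "\<dots> \<le> card S * card S"
    using finS by (intro mult_mono card_image_le) auto
  finally show ?thesis by (simp add: sep_order_def S_def power2_eq_square)
qed

end
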